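(* Let $M,N\ge1$, $\mathbf y\in\mathbb{R}^M$, $\mathbf H\in\mathbb{R}^{M\times N}$ with $R=\operatorname{rank}(\mathbf H)\ge1$, and $\sigma_e^2>0$, $\sigma_\epsilon^2>0$. Let $\mathbf H=\mathbf U\boldsymbol\Sigma\mathbf V^{\mathrm T}$ be a singular value decomposition with nonzero singular values $\lambda_1\ge\cdots\ge\lambda_R>0$, and $\widetilde{\mathbf y}=\mathbf U^{\mathrm T}\mathbf y$. Consider the negative log-likelihood $$f(\mathbf x)=\frac{\|\mathbf y-\mathbf H\mathbf x\|_2^2}{2(\sigma_e^2\|\mathbf x\|_2^2+\sigma_\epsilon^2)}+\frac M2\log(\sigma_e^2\|\mathbf x\|_2^2+\sigma_\epsilon^2),\qquad \mathbf x\in\mathbb{R}^N,$$ and the optimization problem (P): minimize over $\mathbf w=(w_1,\dots,w_N)\in\mathbb{R}^N$ and $z>0$ $$\Phi(\mathbf w,z)=\sum_{j=1}^R\frac12\Big(\widetilde y_j^2 z+\lambda_j^2w_j-2|\widetilde y_j|\lambda_j\sqrt{w_jz}\Big)+\frac12\|\widetilde{\mathbf y}_{R+1:M}\|_2^2\,z-\frac M2\log z$$ subject to $\sigma_e^2\sum_{i=1}^N w_i+\sigma_\epsilon^2 z=1$ and $w_i\ge0$ for $i=1,\dots,N$. Then: (i) $\Phi$ is a convex function on $\{(\mathbf w,z):\mathbf w\ge\mathbf 0,\ z>0\}$, so (P) is a convex optimization problem; (ii) $\inf_{\mathbf x\in\mathbb{R}^N}f(\mathbf x)$ equals the optimal value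 of (P); (iii) strong duality holds for (P), i.e. the optimal value of (P) equals the optimal value of its Lagrangian dual problem (with multipliers for the equality constraint and the constraints $w_i\ge0$).
   Context: $\widetilde{\mathbf y}_{R+1:M}=(\widetilde y_{R+1},\dots,\widetilde y_M)^{\mathrm T}$; if $R=M$ it is empty and its squared norm is $0$. The function $f$ is, up to additive constants, the negative log-likelihood of $\mathbf x$ in the model $\mathbf y=(\mathbf H+\mathbf E)\mathbf x+\boldsymbol\epsilon$ with $\mathbf E$ having i.i.d. $\mathcal N(0,\sigma_e^2)$ entries and $\boldsymbol\epsilon\sim\mathcal N(\mathbf 0,\sigma_\epsilon^2\mathbf I_M)$ independent. *)

theory Defs
  imports "Jordan_Normal_Form.DL_Rank" "HOL-Library.Extended_Real"
begin

definition sqnorm :: "real vec \<Rightarrow> real" where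
  "sqnorm x = x \<bullet> x"

definition orth_mat :: "nat \<Rightarrow> real mat \<Rightarrow> bool" where
  "orth_mat n Q \<longleftrightarrow> Q \<in> carrier_mat n n \<and> transpose_mat Q * Q = 1\<^sub>m n"

text \<open>Singular value decomposition H = U Sigma V^T of an M x N matrix, with exactly R nonzero
  singular values lam 0 >= ... >= lam (R-1) > 0 (0-based indices).\<close>
definition is_svd :: "nat \<Rightarrow> nat \<Rightarrow> real mat \<Rightarrow> real mat \<Rightarrow> real mat \<Rightarrow> nat \<Rightarrow> (nat \<Rightarrow> real) \<Rightarrow> bool" where
  "is_svd M N H U V R lam \<longleftrightarrow>
     orth_mat M U \<and> orth_mat N V \<and>
     (\<forall>j<R. lam j > 0) \<and> (\<forall>i j. i \<le> j \<and> j < R \<longrightarrow> lam j \<le> lam i) \<and>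
     H = U * mat M N (\<lambda>(i, j). if i = j \<and> i < R then lam i else 0) * transpose_mat V"

definition nll :: "nat \<Rightarrow> real vec \<Rightarrow> real mat \<Rightarrow> real \<Rightarrow> real \<Rightarrow> real vec \<Rightarrow> real" where
  "nll M y H se2 sep2 x =
     sqnorm (y - H *\<^sub>v x) / (2 * (se2 * sqnorm x + sep2))
     + real M / 2 * ln (se2 * sqnorm x + sep2)"

text \<open>Objective Phi of problem (P); yt = U^T y; indices 0-based (j = 0..R-1).\<close>
definition Phi :: "nat \<Rightarrow> nat \<Rightarrow> real vec \<Rightarrow> (nat \<Rightarrow> real) \<Rightarrow> real vec \<Rightarrow> real \<Rightarrow> real" where
  "Phi M R yt lam w z =
     (\<Sum>j<R. (yt $ j ^ 2 * z + lam j ^ 2 * w $ j - 2 * \<bar>yt $ j\<bar> * lam j * sqrt (w $ j * z)) / 2)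
     + (\<Sum>j\<in>{R..<M}. yt $ j ^ 2) / 2 * z - real M / 2 * ln z"

definition dom_P :: "nat \<Rightarrow> (real vec \<times> real) set" where
  "dom_P N = {(w, z). w \<in> carrier_vec N \<and> (\<forall>i<N. w $ i \<ge> 0) \<and> z > 0}"

definition feas_P :: "nat \<Rightarrow> real \<Rightarrow> real \<Rightarrow> (real vec \<times> real) set" where
  "feas_P N se2 sep2 = {(w, z). (w, z) \<in> dom_P N \<and> se2 * (\<Sum>i<N. w $ i) + sep2 * z = 1}"

text \<open>Lagrangian with multiplier nu for the equality constraint and mu_i >= 0 for the
  constraints w_i >= 0 (written as -w_i <= 0).\<close>
definition lagr_P :: "nat \<Rightarrow> nat \<Rightarrow> nat \<Rightarrow> real \<Rightarrow> real \<Rightarrow> real vec \<Rightarrow> (nat \<Rightarrow> real) \<Rightarrow>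
     real vec \<Rightarrow> real \<Rightarrow> real \<Rightarrow> real vec \<Rightarrow> real" where
  "lagr_P M N R se2 sep2 yt lam w z nu mu =
     Phi M R yt lam w z + nu * (se2 * (\<Sum>i<N. w $ i) + sep2 * z - 1) - (\<Sum>i<N. mu $ i * w $ i)"

definition primal_val :: "nat \<Rightarrow> nat \<Rightarrow> nat \<Rightarrow> real \<Rightarrow> real \<Rightarrow> real vec \<Rightarrow> (nat \<Rightarrow> real) \<Rightarrow> ereal" where
  "primal_val M N R se2 sep2 yt lam = (INF p\<in>feas_P N se2 sep2. ereal (Phi M R yt lam (fst p) (snd p)))"

definition dual_fun :: "nat \<Rightarrow> nat \<Rightarrow> nat \<Rightarrow> real \<Rightarrow> real \<Rightarrow> real vec \<Rightarrow> (nat \<Rightarrow> real) \<Rightarrow>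
     real \<Rightarrow> real vec \<Rightarrow> ereal" where
  "dual_fun M N R se2 sep2 yt lam nu mu =
     (INF p\<in>dom_P N. ereal (lagr_P M N R se2 sep2 yt lam (fst p) (snd p) nu mu))"

definition dual_val :: "nat \<Rightarrow> nat \<Rightarrow> nat \<Rightarrow> real \<Rightarrow> real \<Rightarrow> real vec \<Rightarrow> (nat \<Rightarrow> real) \<Rightarrow> ereal" where
  "dual_val M N R se2 sep2 yt lam =
     (SUP d\<in>{(nu, mu). mu \<in> carrier_vec N \<and> (\<forall>i<N. mu $ i \<ge> 0)}.
        dual_fun M N R se2 sep2 yt lam (fst d) (snd d))"

end

theory Submission
  imports Defs
begin


lemma (in vec_space) rank_le_nr:
  assumes "A \<in> carrier_mat n nc"
  shows "rank A \<le> n"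
proof -
  obtain S where S: "maximal S (\<lambda>T. T \<subseteq> set (cols A) \<and> lin_indpt T)"
    using maximal_exists[of "(\<lambda>T. T \<subseteq> set (cols A) \<and> lin_indpt T)" "card (set (cols A))" "{}"]
    by (meson List.finite_set card_mono empty_iff empty_subsetI finite_lin_indpt2 rev_finite_subset)
  have S2: "S \<subseteq> set (cols A) \<and> lin_indpt S" using S unfolding maximal_def by (rule conjunct1)
  have "set (cols A) \<subseteq> carrier_vec n" using cols_dim assms by blast
  then have sub: "S \<subseteq> carrier_vec n" using S2 by blast
  have "card S \<le> dim" using li_le_dim(2)[OF fin_dim] sub S2 by auto
  then show ?thesis using rank_card_indpt[OF assms S] dim_is_n by simp
qed

lemma orth_right:
  assumes "orth_mat n Q" shows "Q * transpose_mat Q = 1\<^sub>m n"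
  using assms mat_mult_left_right_inverse[of "transpose_mat Q" n Q] unfolding orth_mat_def
  by auto

lemma orth_sqnorm:
  assumes "orth_mat n Q" and v: "v \<in> carrier_vec n"
  shows "sqnorm (Q *\<^sub>v v) = sqnorm v"
proof -
  have Q: "Q \<in> carrier_mat n n" using assms unfolding orth_mat_def by auto
  have "sqnorm (Q *\<^sub>v v) = (transpose_mat Q *\<^sub>v (Q *\<^sub>v v)) \<bullet> v"
    unfolding sqnorm_def using transpose_vec_mult_scalar[OF Q v, of "Q *\<^sub>v v"] Q v by simp
  also have "transpose_mat Q *\<^sub>v (Q *\<^sub>v v) = (transpose_mat Q * Q) *\<^sub>v v"
    using Q v by simp
  also have "\<dots> = v" using assms v unfolding orth_mat_def by simp
  finally show ?thesis unfolding sqnorm_def .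
qed

lemma orth_transpose:
  assumes "orth_mat n Q" shows "orth_mat n (transpose_mat Q)"
  using orth_right[OF assms] assms unfolding orth_mat_def by auto

lemma sqnorm_sum: "v \<in> carrier_vec n \<Longrightarrow> sqnorm v = (\<Sum>i<n. (v $ i)^2)"
  unfolding sqnorm_def scalar_prod_def by (simp add: power2_eq_square atLeast0LessThan)

lemma sigma_norm:
  fixes lam :: "nat \<Rightarrow> real"
  assumes "R \<le> M" "R \<le> N" and yt: "yt \<in> carrier_vec M" and xt: "xt \<in> carrier_vec N"
  shows "sqnorm (yt - mat M N (\<lambda>(i, j). if i = j \<and> i < R then lam i else 0) *\<^sub>v xt)
     = (\<Sum>j<R. (yt $ j - lam j * xt $ j)^2) + (\<Sum>j\<in>{R..<M}. yt $ j ^ 2)"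
proof -
  let ?S = "mat M N (\<lambda>(i, j). if i = j \<and> i < R then lam i else 0)"
  have Sx: "(?S *\<^sub>v xt) $ i = (if i < R then lam i * xt $ i else 0)" if "i < M" for i
  proof -
    have "(?S *\<^sub>v xt) $ i = (\<Sum>k\<in>{0..<N}. (if i = k \<and> i < R then lam i else 0) * xt $ k)"
      using that xt by (simp add: row_def scalar_prod_def)
    also have "\<dots> = (\<Sum>k\<in>{0..<N}. (if k = i then (if i < R then lam i * xt $ i else 0) else 0))"
      by (rule sum.cong) auto
    also have "\<dots> = (if i < R then lam i * xt $ i else 0)"
      using assms that by (simp add: sum.delta')
    finally show ?thesis .
  qed
  have d: "yt - ?S *\<^sub>v xt \<in> carrier_vec M" by (intro carrier_vecI) simp
  have "sqnorm (yt - ?S *\<^sub>v xt) = (\<Sum>i<M. ((yt - ?S *\<^sub>v xt) $ i)^2)"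
    by (rule sqnorm_sum[OF d])
  also have "\<dots> = (\<Sum>i<M. (if i < R then (yt $ i - lam i * xt $ i)^2 else yt $ i ^ 2))"
    using yt Sx by (intro sum.cong) auto
  also have "\<dots> = (\<Sum>i<R. (if i < R then (yt $ i - lam i * xt $ i)^2 else yt $ i ^ 2))
      + (\<Sum>i\<in>{R..<M}. (if i < R then (yt $ i - lam i * xt $ i)^2 else yt $ i ^ 2))"
    by (rule sum.atLeastLessThan_concat[of 0 R M, symmetric, unfolded atLeast0LessThan]) (use assms in auto)
  also have "\<dots> = (\<Sum>j<R. (yt $ j - lam j * xt $ j)^2) + (\<Sum>j\<in>{R..<M}. yt $ j ^ 2)"
    by (intro arg_cong2[where f="(+)"] sum.cong) auto
  finally show ?thesis .
qed



lemma sqrt_concave2: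
  fixes w1 z1 w2 z2 t :: real
  assumes "0 \<le> w1" "0 \<le> z1" "0 \<le> w2" "0 \<le> z2" "0 \<le> t" "t \<le> 1"
  shows "t * sqrt (w1*z1) + (1-t) * sqrt (w2*z2) \<le> sqrt ((t*w1 + (1-t)*w2) * (t*z1 + (1-t)*z2))"
proof -
  define a1 where "a1 = sqrt w1"
  define a2 where "a2 = sqrt w2"
  define b1 where "b1 = sqrt z1"
  define b2 where "b2 = sqrt z2"
  have w1: "w1 = a1^2" and w2: "w2 = a2^2" and z1: "z1 = b1^2" and z2: "z2 = b2^2"
    using assms by (simp_all add: a1_def a2_def b1_def b2_def)
  have s1: "sqrt (w1*z1) = a1*b1" and s2: "sqrt (w2*z2) = a2*b2"
    by (simp_all add: a1_def a2_def b1_def b2_def real_sqrt_mult)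
  have id: "(t*w1 + (1-t)*w2) * (t*z1 + (1-t)*z2) - (t * (a1*b1) + (1-t) * (a2*b2))^2
      = t*(1-t)*(a1*b2-a2*b1)^2"
    unfolding w1 w2 z1 z2 by (simp add: power2_eq_square algebra_simps)
  have "0 \<le> t*(1-t)*(a1*b2-a2*b1)^2" using assms by simp
  then have "(t * (a1*b1) + (1-t) * (a2*b2))^2 \<le> (t*w1 + (1-t)*w2) * (t*z1 + (1-t)*z2)"
    using id by linarith
  then show ?thesis unfolding s1 s2 by (rule real_le_rsqrt)
qed

lemma ln_concave2:
  fixes z1 z2 t :: real
  assumes "0 < z1" "0 < z2" "0 \<le> t" "t \<le> 1"
  shows "t * ln z1 + (1-t) * ln z2 \<le> ln (t*z1 + (1-t)*z2)"
proof -
  define m where "m = t*z1 + (1-t)*z2"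
  have m: "m > 0"
  proof (cases "t = 0")
    case True then show ?thesis using assms by (simp add: m_def)
  next
    case False
    then have "t*z1 > 0" using assms by simp
    moreover have "(1-t)*z2 \<ge> 0" using assms by simp
    ultimately show ?thesis by (simp add: m_def)
  qed
  have l1: "ln z1 - ln m \<le> z1/m - 1"
    using ln_le_minus_one[of "z1/m"] assms m by (simp add: ln_div)
  have l2: "ln z2 - ln m \<le> z2/m - 1"
    using ln_le_minus_one[of "z2/m"] assms m by (simp add: ln_div)
  have "t * (ln z1 - ln m) + (1-t) * (ln z2 - ln m) \<le> t * (z1/m - 1) + (1-t) * (z2/m - 1)"
    using l1 l2 assms by (intro add_mono mult_left_mono) auto
  also have "\<dots> = (t*z1 + (1-t)*z2)/m - 1" using m by (simp add: field_simps)
  also have "\<dots> = 0" using m by (simp add: m_def[symmetric])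
  finally have "t * ln z1 + (1-t) * ln z2 \<le> ln m" by (simp add: algebra_simps)
  then show ?thesis by (simp add: m_def)
qed

lemma comb_aux:
  fixes a b t x1 x2 y1 y2 :: real
  shows "a = t*x1 + (1-t)*x2 \<Longrightarrow> t*y1 + (1-t)*y2 \<le> b \<Longrightarrow> a - b \<le> t*(x1 - y1) + (1-t)*(x2 - y2)"
  by (simp add: algebra_simps)

lemma kcomb: fixes t k a b :: real shows "t*(k*a) + (1-t)*(k*b) = k*(t*a + (1-t)*b)"
  by (simp add: algebra_simps)

lemma comb3:
  fixes t Sc S1 S2 Tc T1 T2 Lc L1 L2 :: real
  shows "Sc \<le> t*S1 + (1-t)*S2 \<Longrightarrow> Tc = t*T1 + (1-t)*T2 \<Longrightarrow> t*L1 + (1-t)*L2 \<le> Lc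
    \<Longrightarrow> Sc + Tc - Lc \<le> t*(S1 + T1 - L1) + (1-t)*(S2 + T2 - L2)"
  by (simp add: algebra_simps)

context
  fixes M N R :: nat and yt :: "real vec" and lam :: "nat \<Rightarrow> real" and se2 sep2 :: real
  assumes RN: "R \<le> N" and lampos: "\<And>j. j < R \<Longrightarrow> lam j > 0"
begin

lemma Phi_convex:
  assumes p: "p \<in> dom_P N" and q: "q \<in> dom_P N" and t: "0 \<le> t" "t \<le> 1"
  shows "Phi M R yt lam (t \<cdot>\<^sub>v fst p + (1 - t) \<cdot>\<^sub>v fst q) (t * snd p + (1 - t) * snd q)
            \<le> t * Phi M R yt lam (fst p) (snd p) + (1 - t) * Phi M R yt lam (fst q) (snd q)"
proof -
  obtain w1 z1 where p1: "p = (w1, z1)" by (cases p)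
  obtain w2 z2 where q1: "q = (w2, z2)" by (cases q)
  have w1: "w1 \<in> carrier_vec N" "\<And>i. i < N \<Longrightarrow> w1 $ i \<ge> 0" and z1: "z1 > 0"
    using p unfolding p1 dom_P_def by auto
  have w2: "w2 \<in> carrier_vec N" "\<And>i. i < N \<Longrightarrow> w2 $ i \<ge> 0" and z2: "z2 > 0"
    using q unfolding q1 dom_P_def by auto
  define wc where "wc = t \<cdot>\<^sub>v w1 + (1 - t) \<cdot>\<^sub>v w2"
  define zc where "zc = t * z1 + (1 - t) * z2"
  have wc: "wc $ j = t * w1 $ j + (1-t) * w2 $ j" if "j < N" for j
    using that w1 w2 by (simp add: wc_def)
  let ?f = "\<lambda>w z j. (yt $ j ^ 2 * z + lam j ^ 2 * w $ j - 2 * \<bar>yt $ j\<bar> * lam j * sqrt (w $ j * z)) / 2"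
  have tm: "?f wc zc j \<le> t * ?f w1 z1 j + (1-t) * ?f w2 z2 j" if j: "j < R" for j
  proof -
    have jN: "j < N" using j RN by simp
    define c where "c = \<bar>yt $ j\<bar> * lam j"
    have c: "c \<ge> 0" using lampos[OF j] by (simp add: c_def)
    have "t * sqrt (w1 $ j * z1) + (1-t) * sqrt (w2 $ j * z2) \<le> sqrt (wc $ j * zc)"
      unfolding wc[OF jN] zc_def
      by (rule sqrt_concave2) (use w1 w2 z1 z2 t jN in auto)
    then have key: "c * (t * sqrt (w1 $ j * z1) + (1-t) * sqrt (w2 $ j * z2)) \<le> c * sqrt (wc $ j * zc)"
      using c by (rule mult_left_mono)
    have e1: "?f wc zc j = (yt $ j ^ 2 * zc + lam j ^ 2 * wc $ j)/2 - c * sqrt (wc $ j * zc)"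
      by (simp add: c_def field_simps)
    have e2: "?f w1 z1 j = (yt $ j ^ 2 * z1 + lam j ^ 2 * w1 $ j)/2 - c * sqrt (w1 $ j * z1)"
      by (simp add: c_def field_simps)
    have e3: "?f w2 z2 j = (yt $ j ^ 2 * z2 + lam j ^ 2 * w2 $ j)/2 - c * sqrt (w2 $ j * z2)"
      by (simp add: c_def field_simps)
    have lin: "(yt $ j ^ 2 * zc + lam j ^ 2 * wc $ j)/2 = t * ((yt $ j ^ 2 * z1 + lam j ^ 2 * w1 $ j)/2)
       + (1-t) * ((yt $ j ^ 2 * z2 + lam j ^ 2 * w2 $ j)/2)"
      unfolding wc[OF jN] zc_def by (simp add: field_simps)
    have dist: "c * (t * sqrt (w1 $ j * z1) + (1-t) * sqrt (w2 $ j * z2))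
       = t * (c * sqrt (w1 $ j * z1)) + (1-t) * (c * sqrt (w2 $ j * z2))"
      by (simp add: algebra_simps)
    show ?thesis unfolding e1 e2 e3 by (rule comb_aux[OF lin]) (use key dist in simp)
  qed
  have S: "(\<Sum>j<R. ?f wc zc j) \<le> t * (\<Sum>j<R. ?f w1 z1 j) + (1-t) * (\<Sum>j<R. ?f w2 z2 j)"
  proof -
    have "(\<Sum>j<R. ?f wc zc j) \<le> (\<Sum>j<R. t * ?f w1 z1 j + (1-t) * ?f w2 z2 j)"
      by (rule sum_mono) (use tm in auto)
    also have "\<dots> = t * (\<Sum>j<R. ?f w1 z1 j) + (1-t) * (\<Sum>j<R. ?f w2 z2 j)"
      by (simp add: sum.distrib sum_distrib_left)
    finally show ?thesis .
  qed
  define T where "T = (\<Sum>j\<in>{R..<M}. yt $ j ^ 2)"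
  have tail: "T / 2 * zc = t * (T / 2 * z1) + (1-t) * (T / 2 * z2)"
    unfolding zc_def by (simp add: field_simps)
  have lnc: "t * (real M / 2 * ln z1) + (1-t) * (real M / 2 * ln z2) \<le> real M / 2 * ln zc"
  proof -
    have "t * ln z1 + (1-t) * ln z2 \<le> ln zc" unfolding zc_def by (rule ln_concave2) (use z1 z2 t in auto)
    then have "real M / 2 * (t * ln z1 + (1-t) * ln z2) \<le> real M / 2 * ln zc"
      by (rule mult_left_mono) simp
    moreover have "t * (real M / 2 * ln z1) + (1-t) * (real M / 2 * ln z2) = real M / 2 * (t * ln z1 + (1-t) * ln z2)"
      by (rule kcomb)
    ultimately show ?thesis by simp
  qed
  have "Phi M R yt lam wc zc = (\<Sum>j<R. ?f wc zc j) + T / 2 * zc - real M / 2 * ln zc"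
    unfolding Phi_def T_def by simp
  also have "\<dots> \<le> t * ((\<Sum>j<R. ?f w1 z1 j) + T / 2 * z1 - real M / 2 * ln z1)
       + (1-t) * ((\<Sum>j<R. ?f w2 z2 j) + T / 2 * z2 - real M / 2 * ln z2)"
    by (rule comb3[OF S tail lnc])
  also have "\<dots> = t * Phi M R yt lam w1 z1 + (1-t) * Phi M R yt lam w2 z2"
    unfolding Phi_def T_def by simp
  finally show ?thesis unfolding p1 q1 wc_def zc_def by simp
qed

lemma Phi_lower:
  assumes "(w, z) \<in> dom_P N"
  shows "Phi M R yt lam w z \<ge> - real M / 2 * ln z"
proof -
  have w: "\<And>i. i < N \<Longrightarrow> w $ i \<ge> 0" and z: "z > 0" using assms unfolding dom_P_def by auto
  have t: "(yt $ j ^ 2 * z + lam j ^ 2 * w $ j - 2 * \<bar>yt $ j\<bar> * lam j * sqrt (w $ j * z)) / 2 \<ge> 0"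
    if j: "j < R" for j
  proof -
    have "w $ j \<ge> 0" using w j RN by simp
    then have "yt $ j ^ 2 * z + lam j ^ 2 * w $ j - 2 * \<bar>yt $ j\<bar> * lam j * sqrt (w $ j * z)
        = (\<bar>yt $ j\<bar> * sqrt z - lam j * sqrt (w $ j))^2"
      using z by (simp add: power2_eq_square algebra_simps real_sqrt_mult power_mult_distrib)
    then show ?thesis by simp
  qed
  have "0 \<le> (\<Sum>j<R. (yt $ j ^ 2 * z + lam j ^ 2 * w $ j - 2 * \<bar>yt $ j\<bar> * lam j * sqrt (w $ j * z)) / 2)"
    by (rule sum_nonneg) (use t in auto)
  moreover have "0 \<le> (\<Sum>j\<in>{R..<M}. yt $ j ^ 2) / 2 * z" using z by (simp add: sum_nonneg)
  ultimately show ?thesis unfolding Phi_def by linarith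
qed

end



lemma perturb_subgrad:
  fixes F a :: "'p \<Rightarrow> real" and D :: "'p set" and comb :: "real \<Rightarrow> 'p \<Rightarrow> 'p \<Rightarrow> 'p"
  assumes apos: "\<And>p. p \<in> D \<Longrightarrow> a p > 0"
    and ex: "\<And>c. c > 0 \<Longrightarrow> \<exists>p\<in>D. a p = c"
    and bdd: "\<And>c. c > 0 \<Longrightarrow> \<exists>B. \<forall>p\<in>D. a p = c \<longrightarrow> B \<le> F p"
    and cD: "\<And>p q t. p \<in> D \<Longrightarrow> q \<in> D \<Longrightarrow> 0 \<le> t \<Longrightarrow> t \<le> 1 \<Longrightarrow> comb t p q \<in> D"
    and ca: "\<And>p q t. p \<in> D \<Longrightarrow> q \<in> D \<Longrightarrow> 0 \<le> t \<Longrightarrow> t \<le> 1 \<Longrightarrow> a (comb t p q) = t * a p + (1-t) * a q"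
    and cF: "\<And>p q t. p \<in> D \<Longrightarrow> q \<in> D \<Longrightarrow> 0 \<le> t \<Longrightarrow> t \<le> 1 \<Longrightarrow> F (comb t p q) \<le> t * F p + (1-t) * F q"
  shows "\<exists>\<nu>. \<forall>p\<in>D. Inf (F ` {p\<in>D. a p = 1}) \<le> F p + \<nu> * (a p - 1)"
proof -
  define \<phi> where "\<phi> c = Inf (F ` {p\<in>D. a p = c})" for c
  have \<phi>le: "\<phi> c \<le> F p" if cp: "c > 0" "p \<in> D" "a p = c" for c p
  proof -
    obtain B where B: "\<forall>p\<in>D. a p = c \<longrightarrow> B \<le> F p" using bdd[OF cp(1)] by blast
    have bb: "bdd_below (F ` {p\<in>D. a p = c})" using B by (intro bdd_belowI[of _ B]) auto
    show ?thesis unfolding \<phi>_def by (rule cInf_lower[OF _ bb]) (use cp in auto)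
  qed
  have \<phi>ge: "k \<le> \<phi> c" if ck: "c > 0" "\<And>p. p \<in> D \<Longrightarrow> a p = c \<Longrightarrow> k \<le> F p" for c k
  proof -
    obtain p0 where "p0 \<in> D" "a p0 = c" using ex[OF ck(1)] by blast
    then have "F ` {p\<in>D. a p = c} \<noteq> {}" by auto
    then show ?thesis unfolding \<phi>_def by (rule cInf_greatest) (use ck in auto)
  qed
  have conv: "\<phi> 1 \<le> t * \<phi> x + (1-t) * \<phi> y"
    if xy: "x > 0" "y > 0" and t: "0 < t" "t < 1" and e: "t * x + (1-t) * y = 1" for x y t
  proof -
    have step1: "(\<phi> 1 - (1-t) * F p2) / t \<le> F p1"
      if p1: "p1 \<in> D" "a p1 = x" and p2: "p2 \<in> D" "a p2 = y" for p1 p2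
    proof -
      have "comb t p1 p2 \<in> D" using cD p1 p2 t by auto
      moreover have "a (comb t p1 p2) = 1" using ca[of p1 p2 t] p1 p2 t e by auto
      ultimately have "\<phi> 1 \<le> F (comb t p1 p2)" using \<phi>le by auto
      also have "\<dots> \<le> t * F p1 + (1-t) * F p2" using cF p1 p2 t by auto
      finally show ?thesis using t by (simp add: field_simps)
    qed
    have step2: "(\<phi> 1 - t * \<phi> x) / (1-t) \<le> F p2" if p2: "p2 \<in> D" "a p2 = y" for p2
    proof -
      have "(\<phi> 1 - (1-t) * F p2) / t \<le> \<phi> x"
        by (rule \<phi>ge) (use xy step1 p2 in auto)
      then show ?thesis using t by (simp add: field_simps)
    qed
    have "(\<phi> 1 - t * \<phi> x) / (1-t) \<le> \<phi> y"
      by (rule \<phi>ge) (use xy step2 in auto)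
    then show ?thesis using t by (simp add: field_simps)
  qed
  have slope: "(\<phi> 1 - \<phi> x) / (1 - x) \<le> (\<phi> y - \<phi> 1) / (y - 1)"
    if "0 < x" "x < 1" "1 < y" for x y
  proof -
    define t where "t = (y - 1) / (y - x)"
    have yx: "y - x > 0" "y \<noteq> x" "x \<noteq> y" using that by auto
    have t1: "0 < t" using that yx unfolding t_def by (intro divide_pos_pos) auto
    have t2: "t < 1" using that yx unfolding t_def by (subst divide_less_eq) auto
    note t = t1 t2
    have omt: "1 - t = (1 - x)/(y - x)" using yx by (simp add: t_def field_simps)
    have yt1: "(y-x)*t = y-1" using yx by (simp add: t_def)
    have yt2: "(y-x)*(1-t) = 1-x" using yx by (simp add: omt)
    have "(y-x) * (t * x + (1-t) * y) = ((y-x)*t) * x + ((y-x)*(1-t)) * y" by (simp add: algebra_simps)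
    also have "\<dots> = (y-x) * 1" unfolding yt1 yt2 by (simp add: algebra_simps)
    finally have e: "t * x + (1-t) * y = 1" using yx by simp
    have "\<phi> 1 \<le> t * \<phi> x + (1-t) * \<phi> y" using conv[OF _ _ t e] that by auto
    then have "(y - x) * \<phi> 1 \<le> (y - x) * (t * \<phi> x + (1-t) * \<phi> y)"
      using yx by (intro mult_left_mono) auto
    also have "\<dots> = ((y-x)*t) * \<phi> x + ((y-x)*(1-t)) * \<phi> y" by (simp add: algebra_simps)
    finally have *: "(y - x) * \<phi> 1 \<le> (y - 1) * \<phi> x + (1 - x) * \<phi> y" unfolding yt1 yt2 .
    have "(\<phi> 1 - \<phi> x) * (y - 1) \<le> (\<phi> y - \<phi> 1) * (1 - x)"
      using * by (simp add: algebra_simps)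
    moreover have "0 < 1 - x" "0 < y - 1" using that by auto
    ultimately show ?thesis by (simp add: divide_le_eq le_divide_eq mult.commute mult.left_commute)
  qed
  define s where "s = Sup ((\<lambda>c. (\<phi> 1 - \<phi> c) / (1 - c)) ` {0<..<1})"
  have bddS: "bdd_above ((\<lambda>c. (\<phi> 1 - \<phi> c) / (1 - c)) ` {0<..<1})"
    using slope[of _ 2] by (intro bdd_aboveI[of _ "(\<phi> 2 - \<phi> 1) / (2 - 1)"]) auto
  have neS: "(\<lambda>c. (\<phi> 1 - \<phi> c) / (1 - c)) ` {0<..<1} \<noteq> {}" by auto
  have sub: "\<phi> 1 + s * (c - 1) \<le> \<phi> c" if c: "c > 0" for c
  proof (cases "c < 1")
    case True
    have "(\<phi> 1 - \<phi> c) / (1 - c) \<le> s" unfolding s_def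
      by (rule cSup_upper) (use bddS True c in auto)
    then show ?thesis using True by (simp add: field_simps)
  next
    case False
    show ?thesis
    proof (cases "c = 1")
      case True then show ?thesis by simp
    next
      case False2: False
      then have c1: "c > 1" using False by simp
      have "s \<le> (\<phi> c - \<phi> 1) / (c - 1)" unfolding s_def
        by (rule cSup_least[OF neS]) (use slope c1 in auto)
      then show ?thesis using c1 by (simp add: field_simps)
    qed
  qed
  have "\<forall>p\<in>D. \<phi> 1 \<le> F p + (- s) * (a p - 1)"
  proof
    fix p assume p: "p \<in> D"
    have "\<phi> 1 + s * (a p - 1) \<le> \<phi> (a p)" using sub apos p by auto
    also have "\<dots> \<le> F p" using \<phi>le apos p by auto
    finally show "\<phi> 1 \<le> F p + (- s) * (a p - 1)" by simp
  qed
  then show ?thesis unfolding \<phi>_def by blast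
qed



definition Gfun :: "nat \<Rightarrow> nat \<Rightarrow> real vec \<Rightarrow> (nat \<Rightarrow> real) \<Rightarrow> real \<Rightarrow> real \<Rightarrow> real vec \<Rightarrow> real" where
  "Gfun M R yt lam se2 sep2 xt =
     ((\<Sum>j<R. (yt $ j - lam j * xt $ j)^2) + (\<Sum>j\<in>{R..<M}. yt $ j ^ 2)) / (2 * (se2 * sqnorm xt + sep2))
     + real M / 2 * ln (se2 * sqnorm xt + sep2)"

lemma sqnorm_nonneg: "sqnorm (v :: real vec) \<ge> 0"
  unfolding sqnorm_def scalar_prod_def by (auto intro: sum_nonneg)

lemma Gaux: fixes z S T k :: real
  shows "z > 0 \<Longrightarrow> (S + T) / (2 * (1 / z)) + k * ln (1 / z) = S * z / 2 + T / 2 * z - k * ln z"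
  by (simp add: ln_div field_simps)

context
  fixes M N R :: nat and yt :: "real vec" and lam :: "nat \<Rightarrow> real" and se2 sep2 :: real
  assumes RN: "R \<le> N" and lampos: "\<And>j. j < R \<Longrightarrow> lam j > 0"
    and se2: "se2 > 0" and sep2: "sep2 > 0"
begin

lemma feas_from_x:
  assumes xt: "xt \<in> carrier_vec N"
  shows "\<exists>p\<in>feas_P N se2 sep2. Phi M R yt lam (fst p) (snd p) \<le> Gfun M R yt lam se2 sep2 xt"
proof -
  define s where "s = se2 * sqnorm xt + sep2"
  have s: "s > 0" unfolding s_def using se2 sep2 sqnorm_nonneg[of xt]
    by (simp add: add_nonneg_pos)
  define w where "w = vec N (\<lambda>i. xt $ i ^ 2 / s)"
  define z where "z = 1 / s"
  have wi: "w $ i = xt $ i ^ 2 / s" if "i < N" for i using that by (simp add: w_def)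
  have sumw: "(\<Sum>i<N. w $ i) = sqnorm xt / s"
    using sqnorm_sum[OF xt] by (simp add: wi sum_divide_distrib)
  have dom: "(w, z) \<in> dom_P N" unfolding dom_P_def using s by (auto simp: w_def z_def)
  have "se2 * (\<Sum>i<N. w $ i) + sep2 * z = (se2 * sqnorm xt + sep2) / s"
    unfolding sumw z_def by (simp add: add_divide_distrib)
  also have "\<dots> = 1" using s unfolding s_def[symmetric] by simp
  finally have feas: "(w, z) \<in> feas_P N se2 sep2" using dom s unfolding feas_P_def by simp
  define T where "T = (\<Sum>j\<in>{R..<M}. yt $ j ^ 2)"
  have tm: "(yt $ j ^ 2 * z + lam j ^ 2 * w $ j - 2 * \<bar>yt $ j\<bar> * lam j * sqrt (w $ j * z)) / 2
       \<le> (yt $ j - lam j * xt $ j)^2 / (2 * s)" if j: "j < R" for j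
  proof -
    have jN: "j < N" using j RN by simp
    have sq: "sqrt (w $ j * z) = \<bar>xt $ j\<bar> / s"
    proof -
      have "w $ j * z = (xt $ j / s)^2" unfolding wi[OF jN] z_def by (simp add: power2_eq_square)
      then show ?thesis using s by (simp add: abs_div)
    qed
    have l: "lam j \<ge> 0" using lampos[OF j] by simp
    have "yt $ j * lam j * xt $ j \<le> \<bar>yt $ j\<bar> * lam j * \<bar>xt $ j\<bar>"
    proof -
      have "yt $ j * lam j * xt $ j \<le> \<bar>yt $ j * lam j * xt $ j\<bar>" by simp
      also have "\<dots> = \<bar>yt $ j\<bar> * lam j * \<bar>xt $ j\<bar>" using l by (simp add: abs_mult)
      finally show ?thesis .
    qed
    then have "yt $ j ^ 2 + lam j ^ 2 * xt $ j ^ 2 - 2 * \<bar>yt $ j\<bar> * lam j * \<bar>xt $ j\<bar>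
        \<le> (yt $ j - lam j * xt $ j)^2"
      by (simp add: power2_eq_square algebra_simps)
    then have ineq: "(yt $ j ^ 2 + lam j ^ 2 * xt $ j ^ 2 - 2 * \<bar>yt $ j\<bar> * lam j * \<bar>xt $ j\<bar>) / (2 * s)
        \<le> (yt $ j - lam j * xt $ j)^2 / (2 * s)"
      using s by (intro divide_right_mono) auto
    have eq: "(yt $ j ^ 2 * z + lam j ^ 2 * w $ j - 2 * \<bar>yt $ j\<bar> * lam j * sqrt (w $ j * z)) / 2
        = (yt $ j ^ 2 + lam j ^ 2 * xt $ j ^ 2 - 2 * \<bar>yt $ j\<bar> * lam j * \<bar>xt $ j\<bar>) / (2 * s)"
      by (subst sq) (use s in \<open>simp add: wi[OF jN] z_def field_simps\<close>)
    from eq ineq show ?thesis by (rule ord_eq_le_trans)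
  qed
  have "Phi M R yt lam w z = (\<Sum>j<R. (yt $ j ^ 2 * z + lam j ^ 2 * w $ j - 2 * \<bar>yt $ j\<bar> * lam j * sqrt (w $ j * z)) / 2)
      + T / (2 * s) + real M / 2 * ln s"
    unfolding Phi_def T_def z_def using s by (simp add: ln_div)
  also have "\<dots> \<le> (\<Sum>j<R. (yt $ j - lam j * xt $ j)^2 / (2 * s)) + T / (2 * s) + real M / 2 * ln s"
    by (intro add_mono order_refl sum_mono tm) auto
  also have "\<dots> = Gfun M R yt lam se2 sep2 xt"
    unfolding Gfun_def T_def s_def[symmetric] by (simp add: sum_divide_distrib add_divide_distrib)
  finally show ?thesis using feas by force
qed

lemma x_from_feas:
  assumes p: "p \<in> feas_P N se2 sep2"
  shows "\<exists>xt\<in>carrier_vec N. Gfun M R yt lam se2 sep2 xt \<le> Phi M R yt lam (fst p) (snd p)"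
proof -
  obtain w z where pw: "p = (w, z)" by (cases p)
  have w: "w \<in> carrier_vec N" "\<And>i. i < N \<Longrightarrow> w $ i \<ge> 0" and z: "z > 0"
    and con: "se2 * (\<Sum>i<N. w $ i) + sep2 * z = 1"
    using p unfolding pw feas_P_def dom_P_def by auto
  define xt where "xt = vec N (\<lambda>i. (if yt $ i < 0 then -1 else 1) * sqrt (w $ i / z))"
  have xt: "xt \<in> carrier_vec N" by (simp add: xt_def)
  have xi: "xt $ i = (if yt $ i < 0 then -1 else 1) * sqrt (w $ i / z)" if "i < N" for i
    using that by (simp add: xt_def)
  have xi2: "xt $ i ^ 2 = w $ i / z" if "i < N" for i
    using w(2)[OF that] z by (simp add: xi[OF that] power_mult_distrib)
  have sn: "sqnorm xt = (\<Sum>i<N. w $ i) / z"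
    using sqnorm_sum[OF xt] by (simp add: xi2 sum_divide_distrib)
  have s: "se2 * sqnorm xt + sep2 = 1 / z"
  proof -
    have "se2 * sqnorm xt + sep2 = (se2 * (\<Sum>i<N. w $ i) + sep2 * z) / z"
      unfolding sn using z by (simp add: field_simps)
    then show ?thesis using con by simp
  qed
  define T where "T = (\<Sum>j\<in>{R..<M}. yt $ j ^ 2)"
  have tm: "(yt $ j - lam j * xt $ j)^2 * z / 2
      = (yt $ j ^ 2 * z + lam j ^ 2 * w $ j - 2 * \<bar>yt $ j\<bar> * lam j * sqrt (w $ j * z)) / 2"
    if j: "j < R" for j
  proof -
    have jN: "j < N" using j RN by simp
    have yx: "yt $ j * xt $ j = \<bar>yt $ j\<bar> * sqrt (w $ j / z)"
      unfolding xi[OF jN] by auto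
    have sz: "sqrt (w $ j / z) * z = sqrt (w $ j * z)"
    proof -
      have "sqrt (w $ j / z) * z = sqrt (w $ j / z) * sqrt (z^2)" using z by simp
      also have "\<dots> = sqrt (w $ j / z * z^2)" by (simp only: real_sqrt_mult)
      also have "w $ j / z * z^2 = w $ j * z" using z by (simp add: power2_eq_square)
      finally show ?thesis .
    qed
    have "(yt $ j - lam j * xt $ j)^2 * z = yt $ j ^ 2 * z + lam j ^ 2 * (xt $ j ^ 2 * z)
        - 2 * lam j * (yt $ j * xt $ j) * z"
      by (simp add: power2_eq_square algebra_simps)
    also have "\<dots> = yt $ j ^ 2 * z + lam j ^ 2 * w $ j - 2 * \<bar>yt $ j\<bar> * lam j * sqrt (w $ j * z)"
      unfolding xi2[OF jN] yx using z sz[symmetric] by (simp add: algebra_simps)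
    finally show ?thesis by simp
  qed
  have "Gfun M R yt lam se2 sep2 xt = (\<Sum>j<R. (yt $ j - lam j * xt $ j)^2) * z / 2 + T / 2 * z - real M / 2 * ln z"
    unfolding Gfun_def s T_def[symmetric] using z by (rule Gaux)
  also have "(\<Sum>j<R. (yt $ j - lam j * xt $ j)^2) * z / 2 = (\<Sum>j<R. (yt $ j - lam j * xt $ j)^2 * z / 2)"
    by (simp add: sum_distrib_right sum_divide_distrib)
  also have "(\<Sum>j<R. (yt $ j - lam j * xt $ j)^2 * z / 2)
     = (\<Sum>j<R. (yt $ j ^ 2 * z + lam j ^ 2 * w $ j - 2 * \<bar>yt $ j\<bar> * lam j * sqrt (w $ j * z)) / 2)"
    by (rule sum.cong) (use tm in auto)
  also have "\<dots> + T / 2 * z - real M / 2 * ln z = Phi M R yt lam w z"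
    unfolding Phi_def T_def by simp
  finally have "Gfun M R yt lam se2 sep2 xt = Phi M R yt lam (fst p) (snd p)" using pw by simp
  then show ?thesis using xt by (intro bexI[of _ xt]) auto
qed

end



theorem mainTheorem3:
  fixes M N R :: nat and y :: "real vec" and H U V :: "real mat"
    and lam :: "nat \<Rightarrow> real" and se2 sep2 :: real
  assumes "M \<ge> 1" and "N \<ge> 1"
    and "y \<in> carrier_vec M" and "H \<in> carrier_mat M N"
    and "R = vec_space.rank M H" and "R \<ge> 1"
    and "se2 > 0" and "sep2 > 0"
    and "is_svd M N H U V R lam"
  defines "yt \<equiv> transpose_mat U *\<^sub>v y"
  shows "(\<forall>p\<in>dom_P N. \<forall>q\<in>dom_P N. \<forall>t::real. 0 \<le> t \<and> t \<le> 1 \<longrightarrow>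
            Phi M R yt lam (t \<cdot>\<^sub>v fst p + (1 - t) \<cdot>\<^sub>v fst q) (t * snd p + (1 - t) * snd q)
            \<le> t * Phi M R yt lam (fst p) (snd p) + (1 - t) * Phi M R yt lam (fst q) (snd q))
       \<and> (INF x\<in>carrier_vec N. ereal (nll M y H se2 sep2 x)) = primal_val M N R se2 sep2 yt lam
       \<and> primal_val M N R se2 sep2 yt lam = dual_val M N R se2 sep2 yt lam"
proof -
  note y = assms(3) and Hc = assms(4) and se2 = assms(7) and sep2 = assms(8)
  define Sg where "Sg = mat M N (\<lambda>(i, j). if i = j \<and> i < R then lam i else 0)"
  have oU: "orth_mat M U" and oV: "orth_mat N V" and lampos: "\<And>j. j < R \<Longrightarrow> lam j > 0"
    and Hd: "H = U * Sg * transpose_mat V"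
    using assms(9) unfolding is_svd_def Sg_def by auto
  have U: "U \<in> carrier_mat M M" using oU unfolding orth_mat_def by auto
  have V: "V \<in> carrier_mat N N" using oV unfolding orth_mat_def by auto
  have Sgc: "Sg \<in> carrier_mat M N" unfolding Sg_def by simp
  have RN: "R \<le> N" using vec_space.rank_le_nc[OF Hc] assms(5) by simp
  have RM: "R \<le> M" using vec_space.rank_le_nr[OF Hc] assms(5) by simp
  have ytc: "yt \<in> carrier_vec M" unfolding yt_def using U y by simp
  have nll_G: "nll M y H se2 sep2 x = Gfun M R yt lam se2 sep2 (transpose_mat V *\<^sub>v x)"
    if x: "x \<in> carrier_vec N" for x
  proof -
    define xt where "xt = transpose_mat V *\<^sub>v x"
    have xt: "xt \<in> carrier_vec N" unfolding xt_def using V x by simp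
    have Hx: "H *\<^sub>v x = U *\<^sub>v (Sg *\<^sub>v xt)"
    proof -
      have "H *\<^sub>v x = (U * Sg) *\<^sub>v (transpose_mat V *\<^sub>v x)"
        unfolding Hd using U Sgc V x by (intro assoc_mult_mat_vec) auto
      also have "\<dots> = U *\<^sub>v (Sg *\<^sub>v xt)" unfolding xt_def using U Sgc V x by simp
      finally show ?thesis .
    qed
    have yU: "y = U *\<^sub>v yt"
    proof -
      have "U *\<^sub>v yt = (U * transpose_mat U) *\<^sub>v y" unfolding yt_def using U y by simp
      also have "\<dots> = y" using orth_right[OF oU] y by simp
      finally show ?thesis by simp
    qed
    have "y - H *\<^sub>v x = U *\<^sub>v (yt - Sg *\<^sub>v xt)"
      unfolding Hx using yU mult_minus_distrib_mat_vec[OF U ytc, of "Sg *\<^sub>v xt"] Sgc xt by simp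
    then have n1: "sqnorm (y - H *\<^sub>v x) = (\<Sum>j<R. (yt $ j - lam j * xt $ j)^2) + (\<Sum>j\<in>{R..<M}. yt $ j ^ 2)"
      using orth_sqnorm[OF oU, of "yt - Sg *\<^sub>v xt"] ytc Sgc xt sigma_norm[OF RM RN ytc xt, of lam]
      unfolding Sg_def by simp
    have n2: "sqnorm x = sqnorm xt"
      unfolding xt_def using orth_sqnorm[OF orth_transpose[OF oV] x] by simp
    show ?thesis unfolding nll_def Gfun_def n1 n2 xt_def[symmetric] by simp
  qed
  have P1: "\<forall>p\<in>dom_P N. \<forall>q\<in>dom_P N. \<forall>t::real. 0 \<le> t \<and> t \<le> 1 \<longrightarrow>
            Phi M R yt lam (t \<cdot>\<^sub>v fst p + (1 - t) \<cdot>\<^sub>v fst q) (t * snd p + (1 - t) * snd q)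
            \<le> t * Phi M R yt lam (fst p) (snd p) + (1 - t) * Phi M R yt lam (fst q) (snd q)"
    using Phi_convex[where lam = lam and yt = yt and M = M, OF RN lampos] by blast
  have A: "\<exists>p\<in>feas_P N se2 sep2. Phi M R yt lam (fst p) (snd p) \<le> nll M y H se2 sep2 x"
    if x: "x \<in> carrier_vec N" for x
  proof -
    have "transpose_mat V *\<^sub>v x \<in> carrier_vec N" using V x by simp
    from feas_from_x[where lam = lam and yt = yt and M = M, OF RN lampos se2 sep2 this] show ?thesis unfolding nll_G[OF x] .
  qed
  have B: "\<exists>x\<in>carrier_vec N. nll M y H se2 sep2 x \<le> Phi M R yt lam (fst p) (snd p)"
    if p: "p \<in> feas_P N se2 sep2" for p
  proof -
    obtain xt where xt: "xt \<in> carrier_vec N" and le: "Gfun M R yt lam se2 sep2 xt \<le> Phi M R yt lam (fst p) (snd p)"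
      using x_from_feas[where lam = lam and yt = yt and M = M, OF RN lampos se2 sep2 p] by blast
    have x: "V *\<^sub>v xt \<in> carrier_vec N" using V xt by simp
    have "transpose_mat V *\<^sub>v (V *\<^sub>v xt) = (transpose_mat V * V) *\<^sub>v xt" using V xt by simp
    also have "\<dots> = xt" using oV xt unfolding orth_mat_def by simp
    finally have "nll M y H se2 sep2 (V *\<^sub>v xt) = Gfun M R yt lam se2 sep2 xt" using nll_G[OF x] by simp
    then show ?thesis using x le by (intro bexI[of _ "V *\<^sub>v xt"]) auto
  qed
  have P2: "(INF x\<in>carrier_vec N. ereal (nll M y H se2 sep2 x)) = primal_val M N R se2 sep2 yt lam"
    unfolding primal_val_def
  proof (rule antisym)
    show "(INF x\<in>carrier_vec N. ereal (nll M y H se2 sep2 x)) \<le> (INF p\<in>feas_P N se2 sep2. ereal (Phi M R yt lam (fst p) (snd p)))"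
    proof (rule INF_greatest)
      fix p assume "p \<in> feas_P N se2 sep2"
      then obtain x :: "real vec" where "x \<in> carrier_vec N" "nll M y H se2 sep2 x \<le> Phi M R yt lam (fst p) (snd p)" using B by blast
      then show "(INF x\<in>carrier_vec N. ereal (nll M y H se2 sep2 x)) \<le> ereal (Phi M R yt lam (fst p) (snd p))"
        by (intro INF_lower2[of x]) auto
    qed
    show "(INF p\<in>feas_P N se2 sep2. ereal (Phi M R yt lam (fst p) (snd p))) \<le> (INF x\<in>carrier_vec N. ereal (nll M y H se2 sep2 x))"
    proof (rule INF_greatest)
      fix x :: "real vec" assume "x \<in> carrier_vec N"
      then obtain p where "p \<in> feas_P N se2 sep2" "Phi M R yt lam (fst p) (snd p) \<le> nll M y H se2 sep2 x" using A by blast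
      then show "(INF p\<in>feas_P N se2 sep2. ereal (Phi M R yt lam (fst p) (snd p))) \<le> ereal (nll M y H se2 sep2 x)"
        by (intro INF_lower2[of p]) auto
    qed
  qed
  define F where "F p = Phi M R yt lam (fst p) (snd p)" for p :: "real vec \<times> real"
  define a where "a p = se2 * (\<Sum>i<N. fst p $ i) + sep2 * snd p" for p :: "real vec \<times> real"
  define comb where "comb t p q = (t \<cdot>\<^sub>v fst p + (1 - t) \<cdot>\<^sub>v fst q, t * snd p + (1 - t) * snd q)"
    for t :: real and p q :: "real vec \<times> real"
  have sumw_nonneg: "(\<Sum>i<N. fst p $ i) \<ge> 0" if "p \<in> dom_P N" for p
    using that unfolding dom_P_def by (auto intro: sum_nonneg)
  have lowc: "- real M / 2 * ln (c / sep2) \<le> F p" if p: "p \<in> dom_P N" "a p = c" for p c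
  proof -
    obtain w z where pw: "p = (w, z)" by (cases p)
    have z: "z > 0" using p unfolding pw dom_P_def by auto
    have "se2 * (\<Sum>i<N. w $ i) \<ge> 0" using sumw_nonneg[OF p(1)] se2 unfolding pw by simp
    then have "sep2 * z \<le> c" using p(2) unfolding a_def pw by simp
    then have "z \<le> c / sep2" using sep2 by (simp add: field_simps)
    then have "ln z \<le> ln (c / sep2)" using z by simp
    then have "- real M / 2 * ln (c / sep2) \<le> - real M / 2 * ln z" by (simp add: mult_left_mono)
    also have "\<dots> \<le> F p" using Phi_lower[where lam = lam and yt = yt and M = M and w = w and z = z, OF RN lampos] p unfolding F_def pw by simp
    finally show ?thesis .
  qed
  have feq: "{p \<in> dom_P N. a p = 1} = feas_P N se2 sep2"
    unfolding feas_P_def a_def by auto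
  obtain \<nu> where nu: "\<forall>p\<in>dom_P N. Inf (F ` {p\<in>dom_P N. a p = 1}) \<le> F p + \<nu> * (a p - 1)"
  proof -
    have "\<exists>\<nu>. \<forall>p\<in>dom_P N. Inf (F ` {p\<in>dom_P N. a p = 1}) \<le> F p + \<nu> * (a p - 1)"
    proof (rule perturb_subgrad[where comb = comb])
      fix p assume p: "p \<in> dom_P N"
      have "sep2 * snd p > 0" using p sep2 unfolding dom_P_def by auto
      then show "a p > 0" using sumw_nonneg[OF p] se2 unfolding a_def
        by (smt (verit) mult_nonneg_nonneg)
    next
      fix c :: real assume c: "c > 0"
      have "(0\<^sub>v N, c / sep2) \<in> dom_P N" using c sep2 unfolding dom_P_def by auto
      moreover have "a (0\<^sub>v N, c / sep2) = c" unfolding a_def using sep2 by simp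
      ultimately show "\<exists>p\<in>dom_P N. a p = c" by blast
    next
      fix c :: real assume c: "c > 0"
      show "\<exists>B. \<forall>p\<in>dom_P N. a p = c \<longrightarrow> B \<le> F p" using lowc by blast
    next
      fix p q and t :: real assume pq: "p \<in> dom_P N" "q \<in> dom_P N" and t: "0 \<le> t" "t \<le> 1"
      obtain w1 z1 where p1: "p = (w1, z1)" by (cases p)
      obtain w2 z2 where q1: "q = (w2, z2)" by (cases q)
      have w1: "w1 \<in> carrier_vec N" "\<And>i. i < N \<Longrightarrow> w1 $ i \<ge> 0" and z1: "z1 > 0"
        using pq unfolding p1 dom_P_def by auto
      have w2: "w2 \<in> carrier_vec N" "\<And>i. i < N \<Longrightarrow> w2 $ i \<ge> 0" and z2: "z2 > 0"
        using pq unfolding q1 dom_P_def by auto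
      have zc: "t * z1 + (1 - t) * z2 > 0"
      proof (cases "t = 0")
        case True then show ?thesis using z2 by simp
      next
        case False
        then have "t * z1 > 0" using t z1 by simp
        moreover have "(1 - t) * z2 \<ge> 0" using t z2 by simp
        ultimately show ?thesis by simp
      qed
      show "comb t p q \<in> dom_P N"
        unfolding comb_def p1 q1 dom_P_def using w1 w2 t zc by auto
      have "(\<Sum>i<N. (t \<cdot>\<^sub>v w1 + (1 - t) \<cdot>\<^sub>v w2) $ i) = (\<Sum>i<N. t * w1 $ i + (1 - t) * w2 $ i)"
        using w1 w2 by (intro sum.cong) auto
      also have "\<dots> = t * (\<Sum>i<N. w1 $ i) + (1 - t) * (\<Sum>i<N. w2 $ i)"
        by (simp add: sum.distrib sum_distrib_left)
      finally have s: "(\<Sum>i<N. (t \<cdot>\<^sub>v w1 + (1 - t) \<cdot>\<^sub>v w2) $ i) = t * (\<Sum>i<N. w1 $ i) + (1 - t) * (\<Sum>i<N. w2 $ i)" .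
      show "a (comb t p q) = t * a p + (1 - t) * a q"
        unfolding a_def comb_def p1 q1 fst_conv snd_conv s by (simp add: algebra_simps)
      show "F (comb t p q) \<le> t * F p + (1 - t) * F q"
        unfolding F_def comb_def using Phi_convex[where lam = lam and yt = yt and M = M, OF RN lampos pq t] by simp
    qed
    then show ?thesis using that by blast
  qed
  define P where "P = Inf (F ` feas_P N se2 sep2)"
  have bddP: "bdd_below (F ` feas_P N se2 sep2)"
    using lowc[of _ 1] unfolding feas_P_def a_def by (intro bdd_belowI[of _ "- real M / 2 * ln (1 / sep2)"]) auto
  have neP: "F ` feas_P N se2 sep2 \<noteq> {}"
  proof -
    have "(0\<^sub>v N, 1 / sep2) \<in> feas_P N se2 sep2" using sep2 unfolding feas_P_def dom_P_def by auto
    then show ?thesis by blast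
  qed
  have pv: "primal_val M N R se2 sep2 yt lam = ereal P"
    unfolding primal_val_def P_def ereal_Inf'[OF bddP neP] F_def by (simp add: image_comp)
  have le1: "dual_val M N R se2 sep2 yt lam \<le> primal_val M N R se2 sep2 yt lam"
    unfolding dual_val_def
  proof (rule SUP_least)
    fix d :: "real \<times> real vec" assume d: "d \<in> {(nu, mu). mu \<in> carrier_vec N \<and> (\<forall>i<N. mu $ i \<ge> 0)}"
    show "dual_fun M N R se2 sep2 yt lam (fst d) (snd d) \<le> primal_val M N R se2 sep2 yt lam"
      unfolding primal_val_def
    proof (rule INF_greatest)
      fix p :: "real vec \<times> real" assume pf: "p \<in> feas_P N se2 sep2"
      then have pd: "p \<in> dom_P N" and ap: "a p = 1" using feq by auto
      have "0 \<le> (\<Sum>i<N. snd d $ i * fst p $ i)"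
        using d pd unfolding dom_P_def by (auto intro!: sum_nonneg)
      then have "lagr_P M N R se2 sep2 yt lam (fst p) (snd p) (fst d) (snd d) \<le> Phi M R yt lam (fst p) (snd p)"
        using ap unfolding lagr_P_def a_def by simp
      then show "dual_fun M N R se2 sep2 yt lam (fst d) (snd d) \<le> ereal (Phi M R yt lam (fst p) (snd p))"
        unfolding dual_fun_def using pd by (intro INF_lower2[of p]) auto
    qed
  qed
  have le2: "primal_val M N R se2 sep2 yt lam \<le> dual_val M N R se2 sep2 yt lam"
    unfolding dual_val_def
  proof (rule SUP_upper2[of "(\<nu>, 0\<^sub>v N)"])
    show "(\<nu>, 0\<^sub>v N) \<in> {(nu, mu). (mu :: real vec) \<in> carrier_vec N \<and> (\<forall>i<N. mu $ i \<ge> 0)}" by auto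
    show "primal_val M N R se2 sep2 yt lam \<le> dual_fun M N R se2 sep2 yt lam (fst (\<nu>, 0\<^sub>v N)) (snd (\<nu>, 0\<^sub>v N))"
      unfolding dual_fun_def pv
    proof (rule INF_greatest)
      fix p :: "real vec \<times> real" assume pd: "p \<in> dom_P N"
      have "P \<le> F p + \<nu> * (a p - 1)" using nu pd unfolding P_def feq by blast
      also have "\<dots> = lagr_P M N R se2 sep2 yt lam (fst p) (snd p) (fst (\<nu>, 0\<^sub>v N)) (snd (\<nu>, 0\<^sub>v N))"
        unfolding lagr_P_def F_def a_def by simp
      finally show "ereal P \<le> ereal (lagr_P M N R se2 sep2 yt lam (fst p) (snd p) (fst (\<nu>, 0\<^sub>v N)) (snd (\<nu>, 0\<^sub>v N)))"
        by simp
    qed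
  qed
  show ?thesis using P1 P2 le1 le2 by simp
qed

end
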